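(* Let $\mathcal{M}=(S,A,\delta)$ be a finite fuzzy transition system with rational membership degrees and let $\gamma\in(0,1)$ be rational. Then $d^\gamma_f$ is a rational vector (indexed by $S\times S$) whose bit size is bounded by a polynomial in $\|\mathcal{M}\|$ and $\|\gamma\|$.
   Context: A fuzzy set on a finite set $X$ is a map $\mu:X\to[0,1]$; $\mathcal{F}(X)$ is the set of fuzzy sets on $X$; $\mu(U)=\max_{x\in U}\mu(x)$; $\mathsf{Supp}(\mu)=\{x\mid \mu(x)>0\}$. A fuzzy transition system is $\mathcal{M}=(S,A,\delta)$ with $S,A$ finite and $\delta:S\times A\to\mathcal{P}(\mathcal{F}(S))$, each $\delta(s,a)$ finite. $\|\mathcal{M}\|=|S|+\sum_{s,a,\mu\in\delta(s,a)}\|\mathsf{Supp}(\mu)\|$, where for a finite set of rationals its size is the total number of bits to encode its elements in binary as fractions; $\|\gamma\|$ is the bit size of $\gamma$. $\mathcal{D}(S)$ is the set of pseudo-ultrametrics $d:S\times S\to[0,1]$, ordered pointwise. Lifting: $\hat d(\mu,\eta)=1$ if $\mu(S)\ne\eta(S)$, and otherwise $\hat d(\mu,\eta)$ is the minimum of $\max_{u,v}\min(d(u,v),x_{uv})$ over $x_{uv}\ge0$ with $\max_v x_{uv}=\mu(u)$ for all $u$ and $\max_u x_{uv}=\eta(v)$ for all $v$. For finite $Z\subseteq\mathcal{F}(S)$: $\hat d(\mu,Z)=\min_{\eta\in Z}\hat d(\mu,\eta)$ if $Z\ne\emptyset$, else $1$. Hausdorff distance: $H_{\hat d}(\emptyset,\emptyset)=0$,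 otherwise $H_{\hat d}(Y,Z)=\max(\max_{\mu\in Y}\hat d(\mu,Z),\max_{\eta\in Z}\hat d(\eta,Y))$. $\Delta(d)(s,t)=\gamma\cdot\max_{a\in A}H_{\hat d}(\delta(s,a),\delta(t,a))$ is monotone on $\mathcal{D}(S)$, and $d^\gamma_f$ is its least fixpoint. *)

theory Defs
  imports "HOL-Analysis.Analysis"
begin

fun nat_bits :: "nat \<Rightarrow> nat" where
  "nat_bits n = (if n \<le> 1 then 1 else 1 + nat_bits (n div 2))"

definition rat_bits :: "rat \<Rightarrow> nat" where
  "rat_bits q = (case quotient_of q of (a, b) \<Rightarrow> 1 + nat_bits (nat \<bar>a\<bar>) + nat_bits (nat b))"

definition real_bits :: "real \<Rightarrow> nat" where
  "real_bits r = rat_bits (THE q. of_rat q = r)"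

definition fuzzy_set :: "nat set \<Rightarrow> (nat \<Rightarrow> real) \<Rightarrow> bool" where
  "fuzzy_set S \<mu> \<longleftrightarrow> (\<forall>x\<in>S. 0 \<le> \<mu> x \<and> \<mu> x \<le> 1) \<and> (\<forall>x. x \<notin> S \<longrightarrow> \<mu> x = 0)"

definition fmax :: "(nat \<Rightarrow> real) \<Rightarrow> nat set \<Rightarrow> real" where
  "fmax \<mu> U = Max (\<mu> ` U)"

definition supp :: "nat set \<Rightarrow> (nat \<Rightarrow> real) \<Rightarrow> nat set" where
  "supp S \<mu> = {x \<in> S. \<mu> x > 0}"

definition fts :: "nat set \<Rightarrow> 'a set \<Rightarrow> (nat \<Rightarrow> 'a \<Rightarrow> (nat \<Rightarrow> real) set) \<Rightarrow> bool" where
  "fts S A \<delta> \<longleftrightarrow> finite S \<and> finite A \<and>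
     (\<forall>s\<in>S. \<forall>a\<in>A. finite (\<delta> s a) \<and> (\<forall>\<mu>\<in>\<delta> s a. fuzzy_set S \<mu>))"

definition rational_fts :: "nat set \<Rightarrow> 'a set \<Rightarrow> (nat \<Rightarrow> 'a \<Rightarrow> (nat \<Rightarrow> real) set) \<Rightarrow> bool" where
  "rational_fts S A \<delta> \<longleftrightarrow> (\<forall>s\<in>S. \<forall>a\<in>A. \<forall>\<mu>\<in>\<delta> s a. \<forall>x\<in>S. \<mu> x \<in> \<rat>)"

definition fts_size :: "nat set \<Rightarrow> 'a set \<Rightarrow> (nat \<Rightarrow> 'a \<Rightarrow> (nat \<Rightarrow> real) set) \<Rightarrow> nat" where
  "fts_size S A \<delta> = card S +
     (\<Sum>s\<in>S. \<Sum>a\<in>A. \<Sum>\<mu>\<in>\<delta> s a. \<Sum>x\<in>supp S \<mu>. real_bits (\<mu> x))"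

definition pseudo_ultrametric :: "nat set \<Rightarrow> (nat \<Rightarrow> nat \<Rightarrow> real) \<Rightarrow> bool" where
  "pseudo_ultrametric S d \<longleftrightarrow>
     (\<forall>x\<in>S. \<forall>y\<in>S. 0 \<le> d x y \<and> d x y \<le> 1) \<and>
     (\<forall>x\<in>S. d x x = 0) \<and>
     (\<forall>x\<in>S. \<forall>y\<in>S. d x y = d y x) \<and>
     (\<forall>x\<in>S. \<forall>y\<in>S. \<forall>z\<in>S. d x z \<le> max (d x y) (d y z)) \<and>
     (\<forall>x y. x \<notin> S \<or> y \<notin> S \<longrightarrow> d x y = 0)"

text \<open>Lifting of d to fuzzy sets (the minimum over couplings; it is attained, so
  it coincides with the infimum).\<close>
definition lift :: "nat set \<Rightarrow> (nat \<Rightarrow> nat \<Rightarrow> real) \<Rightarrow> (nat \<Rightarrow> real) \<Rightarrow> (nat \<Rightarrow> real) \<Rightarrow> real" where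
  "lift S d \<mu> \<eta> =
    (if fmax \<mu> S \<noteq> fmax \<eta> S then 1
     else Inf { Max { min (d u v) (x u v) | u v. u \<in> S \<and> v \<in> S } | x.
                (\<forall>u\<in>S. \<forall>v\<in>S. 0 \<le> x u v) \<and>
                (\<forall>u\<in>S. Max ((\<lambda>v. x u v) ` S) = \<mu> u) \<and>
                (\<forall>v\<in>S. Max ((\<lambda>u. x u v) ` S) = \<eta> v) })"

definition lift_set :: "nat set \<Rightarrow> (nat \<Rightarrow> nat \<Rightarrow> real) \<Rightarrow> (nat \<Rightarrow> real) \<Rightarrow> (nat \<Rightarrow> real) set \<Rightarrow> real" where
  "lift_set S d \<mu> Z = (if Z = {} then 1 else Min ((\<lambda>\<eta>. lift S d \<mu> \<eta>) ` Z))"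

text \<open>Hausdorff distance; a maximum over an empty family is read as 0
  (all quantities are nonnegative).\<close>
definition hausdorff :: "nat set \<Rightarrow> (nat \<Rightarrow> nat \<Rightarrow> real) \<Rightarrow> (nat \<Rightarrow> real) set \<Rightarrow> (nat \<Rightarrow> real) set \<Rightarrow> real" where
  "hausdorff S d Y Z =
    (if Y = {} \<and> Z = {} then 0
     else max (Max (insert 0 ((\<lambda>\<mu>. lift_set S d \<mu> Z) ` Y)))
              (Max (insert 0 ((\<lambda>\<eta>. lift_set S d \<eta> Y) ` Z))))"

definition Delta :: "nat set \<Rightarrow> 'a set \<Rightarrow> (nat \<Rightarrow> 'a \<Rightarrow> (nat \<Rightarrow> real) set) \<Rightarrow> real
                      \<Rightarrow> (nat \<Rightarrow> nat \<Rightarrow> real) \<Rightarrow> (nat \<Rightarrow> nat \<Rightarrow> real)" where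
  "Delta S A \<delta> \<gamma> d = (\<lambda>s t. if s \<in> S \<and> t \<in> S
       then \<gamma> * Max (insert 0 ((\<lambda>a. hausdorff S d (\<delta> s a) (\<delta> t a)) ` A))
       else 0)"

definition fuzzy_dist :: "nat set \<Rightarrow> 'a set \<Rightarrow> (nat \<Rightarrow> 'a \<Rightarrow> (nat \<Rightarrow> real) set) \<Rightarrow> real
                          \<Rightarrow> (nat \<Rightarrow> nat \<Rightarrow> real)" where
  "fuzzy_dist S A \<delta> \<gamma> = (THE d. pseudo_ultrametric S d \<and> Delta S A \<delta> \<gamma> d = d \<and>
       (\<forall>d'. pseudo_ultrametric S d' \<and> Delta S A \<delta> \<gamma> d' = d' \<longrightarrow>
              (\<forall>x\<in>S. \<forall>y\<in>S. d x y \<le> d' x y)))"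

end

theory Submission
  imports Defs
begin


lemma nat_bits_simp: "nat_bits n = (if n \<le> 1 then 1 else 1 + nat_bits (n div 2))"
  by (rule nat_bits.simps)

declare nat_bits.simps[simp del]

lemma nat_bits_le: "n < 2^k \<Longrightarrow> 1 \<le> k \<Longrightarrow> nat_bits n \<le> k"
proof (induction n arbitrary: k rule: nat_bits.induct)
  case (1 n)
  show ?case
  proof (cases "n \<le> 1")
    case True then show ?thesis using 1 by (simp add: nat_bits_simp[of n])
  next
    case False
    then have "k \<noteq> 1" using 1(2) by auto
    then have k2: "k \<ge> 2" using 1(3) by auto
    have "n div 2 < 2^(k-1)"
    proof -
      have "2^k = 2 * (2::nat)^(k-1)" using k2 by (metis Suc_diff_1 le_trans one_le_numeral not_less_eq_eq power_Suc zero_less_iff_neq_zero not_one_le_zero)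
      then show ?thesis using 1(2) by auto
    qed
    then have "nat_bits (n div 2) \<le> k - 1" using 1(1)[of "k-1"] False k2 by auto
    then show ?thesis using False k2 by (simp add: nat_bits_simp[of n])
  qed
qed

lemma nat_bits_lt: "n < 2 ^ nat_bits n"
proof (induction n rule: nat_bits.induct)
  case (1 n)
  show ?case
  proof (cases "n \<le> 1")
    case True then show ?thesis by (simp add: nat_bits_simp[of n])
  next
    case False
    then have "n div 2 < 2 ^ nat_bits (n div 2)" using 1 by auto
    then have "n < 2 * 2 ^ nat_bits (n div 2)" by linarith
    then show ?thesis using False by (simp add: nat_bits_simp[of n])
  qed
qed

lemma nat_bits_pos: "1 \<le> nat_bits n"
  by (simp add: nat_bits_simp[of n])

lemma nat_bits_mono: "m \<le> n \<Longrightarrow> nat_bits m \<le> nat_bits n"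
  using nat_bits_le[of m "nat_bits n"] nat_bits_lt[of n] nat_bits_pos[of n] by linarith

lemma nat_bits_mult: "nat_bits (a * b) \<le> nat_bits a + nat_bits b"
proof -
  have "a * b < 2 ^ nat_bits a * 2 ^ nat_bits b"
    using nat_bits_lt[of a] nat_bits_lt[of b] by (simp add: mult_strict_mono)
  then show ?thesis using nat_bits_le[of "a*b" "nat_bits a + nat_bits b"] nat_bits_pos[of a]
    by (simp add: power_add)
qed

lemma rat_bits_mult: "rat_bits (p * q) \<le> rat_bits p + rat_bits q"
proof -
  obtain a c where pq: "quotient_of p = (a, c)" by (cases "quotient_of p")
  obtain b d where qq: "quotient_of q = (b, d)" by (cases "quotient_of q")
  have c0: "c > 0" using quotient_of_denom_pos[OF pq] .
  have d0: "d > 0" using quotient_of_denom_pos[OF qq] .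
  define g where "g = gcd (a*b) (c*d)"
  have g0: "g > 0" using c0 d0 unfolding g_def by (simp add: gcd_pos_int)
  have "quotient_of (p*q) = (a*b div g, c*d div g)"
    using rat_times_code[of p q] pq qq c0 d0 by (simp add: normalize_def g_def Let_def)
  moreover have "\<bar>a*b div g\<bar> \<le> \<bar>a*b\<bar>"
  proof -
    have "g dvd a*b" unfolding g_def by simp
    then obtain k where "a*b = g*k" by blast
    then show ?thesis using g0 by (simp add: abs_mult mult_le_cancel_right1)
  qed
  moreover have "c*d div g \<le> c*d"
  proof -
    have "g dvd c*d" unfolding g_def by simp
    then obtain k where "c*d = g*k" by blast
    moreover have "k > 0" using calculation c0 d0 g0 by (metis mult_pos_pos zero_less_mult_pos)
    ultimately show ?thesis using g0 by simp
  qed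
  ultimately have "rat_bits (p*q) \<le> 1 + nat_bits (nat \<bar>a*b\<bar>) + nat_bits (nat (c*d))"
    unfolding rat_bits_def using nat_bits_mono
    by (simp add: add_mono nat_mono)
  also have "\<dots> \<le> 1 + (nat_bits (nat \<bar>a\<bar>) + nat_bits (nat \<bar>b\<bar>)) + (nat_bits (nat c) + nat_bits (nat d))"
    using nat_bits_mult[of "nat \<bar>a\<bar>" "nat \<bar>b\<bar>"] nat_bits_mult[of "nat c" "nat d"] c0 d0
    by (simp add: abs_mult nat_mult_distrib)
  also have "\<dots> \<le> rat_bits p + rat_bits q" unfolding rat_bits_def pq qq by simp
  finally show ?thesis .
qed

lemma rat_bits_one: "rat_bits 1 = 3"
  by (simp add: rat_bits_def nat_bits_simp)

lemma rat_bits_zero: "rat_bits 0 = 3"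
  by (simp add: rat_bits_def nat_bits_simp)

lemma rat_bits_pow: "rat_bits (r ^ j) \<le> 3 + j * rat_bits r"
proof (induction j)
  case 0 then show ?case by (simp add: rat_bits_one)
next
  case (Suc j)
  have "rat_bits (r ^ Suc j) \<le> rat_bits r + rat_bits (r ^ j)"
    using rat_bits_mult[of r "r^j"] by simp
  then show ?case using Suc by simp
qed

lemma real_bits_of_rat: "real_bits (of_rat q) = rat_bits q"
  unfolding real_bits_def by simp



definition cpl :: "nat set \<Rightarrow> (nat\<Rightarrow>real) \<Rightarrow> (nat\<Rightarrow>real) \<Rightarrow> (nat\<Rightarrow>nat\<Rightarrow>real) \<Rightarrow> bool" where
  "cpl S \<mu> \<eta> x \<longleftrightarrow> (\<forall>u\<in>S. \<forall>v\<in>S. 0 \<le> x u v) \<and>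
     (\<forall>u\<in>S. Max ((\<lambda>v. x u v) ` S) = \<mu> u) \<and> (\<forall>v\<in>S. Max ((\<lambda>u. x u v) ` S) = \<eta> v)"

definition val :: "nat set \<Rightarrow> (nat\<Rightarrow>nat\<Rightarrow>real) \<Rightarrow> (nat\<Rightarrow>nat\<Rightarrow>real) \<Rightarrow> real" where
  "val S d x = Max ((\<lambda>(u,v). min (d u v) (x u v)) ` (S \<times> S))"

definition GG :: "nat set \<Rightarrow> (nat\<Rightarrow>nat\<Rightarrow>real) \<Rightarrow> (nat\<Rightarrow>real) \<Rightarrow> (nat\<Rightarrow>real) \<Rightarrow> real set" where
  "GG S d \<mu> \<eta> = insert 0 ((\<lambda>(u,v). d u v) ` (S \<times> S) \<union> \<mu> ` S \<union> \<eta> ` S)"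

lemma lift_alt: "lift S d \<mu> \<eta> = (if fmax \<mu> S \<noteq> fmax \<eta> S then 1 else Inf (val S d ` {x. cpl S \<mu> \<eta> x}))"
proof -
  have e: "\<And>x. {min (d u v) (x u v) | u v. u \<in> S \<and> v \<in> S} = (\<lambda>(u,v). min (d u v) (x u v)) ` (S \<times> S)"
    by auto
  show ?thesis unfolding lift_def cpl_def val_def e by (simp add: setcompr_eq_image)
qed

lemma Max_img_eq: "finite S \<Longrightarrow> S \<noteq> {} \<Longrightarrow> Max (f ` S) = (m::real) \<longleftrightarrow> (\<exists>v\<in>S. f v = m) \<and> (\<forall>v\<in>S. f v \<le> m)"
  by (auto simp: Max_eq_iff)

lemma cpl_iff: "finite S \<Longrightarrow> S \<noteq> {} \<Longrightarrow> cpl S \<mu> \<eta> x \<longleftrightarrow> (\<forall>u\<in>S. \<forall>v\<in>S. 0 \<le> x u v) \<and>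
   (\<forall>u\<in>S. (\<exists>v\<in>S. x u v = \<mu> u) \<and> (\<forall>v\<in>S. x u v \<le> \<mu> u)) \<and>
   (\<forall>v\<in>S. (\<exists>u\<in>S. x u v = \<eta> v) \<and> (\<forall>u\<in>S. x u v \<le> \<eta> v))"
  unfolding cpl_def by (simp add: Max_img_eq)

lemma val_le_iff: "finite S \<Longrightarrow> S \<noteq> {} \<Longrightarrow> val S d x \<le> b \<longleftrightarrow> (\<forall>u\<in>S. \<forall>v\<in>S. min (d u v) (x u v) \<le> b)"
  unfolding val_def by (auto simp: Max_le_iff)

lemma val_ge: "finite S \<Longrightarrow> u \<in> S \<Longrightarrow> v \<in> S \<Longrightarrow> min (d u v) (x u v) \<le> val S d x"
  unfolding val_def by (rule Max_ge) auto

lemma val_att: "finite S \<Longrightarrow> S \<noteq> {} \<Longrightarrow> \<exists>u\<in>S. \<exists>v\<in>S. val S d x = min (d u v) (x u v)"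
proof -
  assume "finite S" "S \<noteq> {}"
  then have "val S d x \<in> (\<lambda>(u,v). min (d u v) (x u v)) ` (S \<times> S)"
    unfolding val_def by (intro Max_in) auto
  then show ?thesis by auto
qed

lemma fmax_props:
  assumes "finite S" "S \<noteq> {}"
  shows "\<exists>u\<in>S. \<mu> u = fmax \<mu> S" "\<And>u. u \<in> S \<Longrightarrow> \<mu> u \<le> fmax \<mu> S"
proof -
  have "fmax \<mu> S \<in> \<mu> ` S" unfolding fmax_def using assms by (intro Max_in) auto
  then show "\<exists>u\<in>S. \<mu> u = fmax \<mu> S" by auto
  show "\<And>u. u \<in> S \<Longrightarrow> \<mu> u \<le> fmax \<mu> S" unfolding fmax_def using assms by auto
qed

lemma cpl_exists:
  assumes fin: "finite S" and ne: "S \<noteq> {}" and fm: "fuzzy_set S \<mu>" "fuzzy_set S \<eta>"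
    and eq: "fmax \<mu> S = fmax \<eta> S"
  shows "cpl S \<mu> \<eta> (\<lambda>u v. min (\<mu> u) (\<eta> v))"
proof -
  obtain u0 where u0: "u0 \<in> S" "\<mu> u0 = fmax \<mu> S" using fmax_props(1)[OF fin ne] by blast
  obtain v0 where v0: "v0 \<in> S" "\<eta> v0 = fmax \<eta> S" using fmax_props(1)[OF fin ne] by blast
  show ?thesis unfolding cpl_iff[OF fin ne]
  proof (intro conjI ballI)
    fix u v assume "u \<in> S" "v \<in> S"
    then show "0 \<le> min (\<mu> u) (\<eta> v)" using fm unfolding fuzzy_set_def by auto
  next
    fix u assume u: "u \<in> S"
    show "\<exists>v\<in>S. min (\<mu> u) (\<eta> v) = \<mu> u"
      using v0 u fmax_props(2)[OF fin ne u, of \<mu>] eq by (intro bexI[of _ v0]) auto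
    show "min (\<mu> u) (\<eta> v) \<le> \<mu> u" if "v \<in> S" for v by auto
  next
    fix v assume v: "v \<in> S"
    show "\<exists>u\<in>S. min (\<mu> u) (\<eta> v) = \<eta> v"
      using u0 v fmax_props(2)[OF fin ne v, of \<eta>] eq by (intro bexI[of _ u0]) auto
    show "min (\<mu> u) (\<eta> v) \<le> \<eta> v" if "u \<in> S" for u by auto
  qed
qed

lemma cpl_round:
  assumes fin: "finite S" and ne: "S \<noteq> {}" and d0: "\<forall>u\<in>S. \<forall>v\<in>S. 0 \<le> d u v"
    and x: "cpl S \<mu> \<eta> x"
  shows "\<exists>x'. cpl S \<mu> \<eta> x' \<and> val S d x' \<le> val S d x \<and> val S d x' \<in> GG S d \<mu> \<eta>"
proof -
  note cx = x[unfolded cpl_iff[OF fin ne]]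
  define m where "m = val S d x"
  obtain u1 where u1: "u1 \<in> S" using ne by blast
  have m0: "0 \<le> m" unfolding m_def
    using val_ge[OF fin u1 u1, of d x] d0 cx u1 by (meson min.boundedI order_trans)
  have finG: "finite (GG S d \<mu> \<eta>)" unfolding GG_def using fin by auto
  define g where "g = Max {e \<in> GG S d \<mu> \<eta>. e \<le> m}"
  have fin2: "finite {e \<in> GG S d \<mu> \<eta>. e \<le> m}" using finG by auto
  have in2: "0 \<in> {e \<in> GG S d \<mu> \<eta>. e \<le> m}" using m0 unfolding GG_def by auto
  have gin: "g \<in> GG S d \<mu> \<eta>" "g \<le> m" unfolding g_def using Max_in[OF fin2] in2 by auto
  have gmax: "\<And>e. e \<in> GG S d \<mu> \<eta> \<Longrightarrow> e \<le> m \<Longrightarrow> e \<le> g" unfolding g_def using fin2 by auto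
  have g0: "0 \<le> g" using gmax[of 0] m0 unfolding GG_def by auto
  define x' where "x' = (\<lambda>u v. if d u v \<le> g then min (\<mu> u) (\<eta> v) else min (min (\<mu> u) (\<eta> v)) g)"
  have mu0: "\<And>u. u \<in> S \<Longrightarrow> 0 \<le> \<mu> u" using cx by (meson order_trans)
  have eta0: "\<And>v. v \<in> S \<Longrightarrow> 0 \<le> \<eta> v" using cx by (meson order_trans)
  have dG: "\<And>u v. u \<in> S \<Longrightarrow> v \<in> S \<Longrightarrow> d u v \<in> GG S d \<mu> \<eta>" unfolding GG_def by auto
  have muG: "\<And>u. u \<in> S \<Longrightarrow> \<mu> u \<in> GG S d \<mu> \<eta>" unfolding GG_def by auto
  have etaG: "\<And>u. u \<in> S \<Longrightarrow> \<eta> u \<in> GG S d \<mu> \<eta>" unfolding GG_def by auto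
  have vx: "\<And>u v. u \<in> S \<Longrightarrow> v \<in> S \<Longrightarrow> min (d u v) (x u v) \<le> m"
    unfolding m_def using val_ge[OF fin] by blast
  have c': "cpl S \<mu> \<eta> x'"
    unfolding cpl_iff[OF fin ne]
  proof (intro conjI ballI)
    fix u v assume "u \<in> S" "v \<in> S"
    then show "0 \<le> x' u v" unfolding x'_def using mu0 eta0 g0 by auto
  next
    fix u assume u: "u \<in> S"
    show "x' u v \<le> \<mu> u" if "v \<in> S" for v unfolding x'_def by auto
    obtain v0 where v0: "v0 \<in> S" "x u v0 = \<mu> u" using cx u by blast
    have le: "\<mu> u \<le> \<eta> v0" using cx u v0 by metis
    show "\<exists>v\<in>S. x' u v = \<mu> u"
    proof (intro bexI[OF _ v0(1)])
      show "x' u v0 = \<mu> u"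
      proof (cases "d u v0 \<le> g")
        case True then show ?thesis unfolding x'_def using le by auto
      next
        case False
        then have "\<not> d u v0 \<le> m" using gmax dG u v0(1) by blast
        then have "\<mu> u \<le> m" using vx[OF u v0(1)] v0(2) by linarith
        then have "\<mu> u \<le> g" using gmax muG u by blast
        then show ?thesis unfolding x'_def using le False by auto
      qed
    qed
  next
    fix v assume v: "v \<in> S"
    show "x' u v \<le> \<eta> v" if "u \<in> S" for u unfolding x'_def by auto
    obtain u0 where u0: "u0 \<in> S" "x u0 v = \<eta> v" using cx v by blast
    have le: "\<eta> v \<le> \<mu> u0" using cx v u0 by metis
    show "\<exists>u\<in>S. x' u v = \<eta> v"
    proof (intro bexI[OF _ u0(1)])
      show "x' u0 v = \<eta> v"
      proof (cases "d u0 v \<le> g")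
        case True then show ?thesis unfolding x'_def using le by auto
      next
        case False
        then have "\<not> d u0 v \<le> m" using gmax dG v u0(1) by blast
        then have "\<eta> v \<le> m" using vx[OF u0(1) v] u0(2) by linarith
        then have "\<eta> v \<le> g" using gmax etaG v by blast
        then show ?thesis unfolding x'_def using le False by auto
      qed
    qed
  qed
  have "val S d x' \<le> g" unfolding val_le_iff[OF fin ne] x'_def by auto
  moreover have "val S d x' \<in> GG S d \<mu> \<eta>"
  proof -
    obtain u v where uv: "u \<in> S" "v \<in> S" "val S d x' = min (d u v) (x' u v)"
      using val_att[OF fin ne] by blast
    have "x' u v \<in> GG S d \<mu> \<eta>"
      unfolding x'_def using muG[OF uv(1)] etaG[OF uv(2)] gin(1) by (auto simp: min_def)
    then show ?thesis using uv dG by (auto simp: min_def)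
  qed
  ultimately show ?thesis using c' gin(2) unfolding m_def by (intro exI[of _ x']) auto
qed

lemma lift_attained:
  assumes fin: "finite S" and ne: "S \<noteq> {}" and d0: "\<forall>u\<in>S. \<forall>v\<in>S. 0 \<le> d u v"
    and fm: "fuzzy_set S \<mu>" "fuzzy_set S \<eta>" and eq: "fmax \<mu> S = fmax \<eta> S"
  shows "\<exists>x. cpl S \<mu> \<eta> x \<and> lift S d \<mu> \<eta> = val S d x \<and> val S d x \<in> GG S d \<mu> \<eta> \<and>
            (\<forall>y. cpl S \<mu> \<eta> y \<longrightarrow> val S d x \<le> val S d y)"
proof -
  define V where "V = val S d ` {x. cpl S \<mu> \<eta> x}"
  define W where "W = V \<inter> GG S d \<mu> \<eta>"
  have finW: "finite W" unfolding W_def GG_def using fin by auto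
  obtain x' where x': "cpl S \<mu> \<eta> x'" "val S d x' \<in> GG S d \<mu> \<eta>"
    using cpl_round[OF fin ne d0 cpl_exists[OF fin ne fm eq]] by blast
  have neW: "W \<noteq> {}" unfolding W_def V_def using x' by blast
  define m where "m = Min W"
  have mW: "m \<in> W" unfolding m_def using finW neW by (rule Min_in)
  have mle: "\<And>v. v \<in> V \<Longrightarrow> m \<le> v"
  proof -
    fix v assume "v \<in> V"
    then obtain y where y: "cpl S \<mu> \<eta> y" "v = val S d y" unfolding V_def by blast
    obtain y' where y': "cpl S \<mu> \<eta> y'" "val S d y' \<le> val S d y" "val S d y' \<in> GG S d \<mu> \<eta>"
      using cpl_round[OF fin ne d0 y(1)] by blast
    have "val S d y' \<in> W" unfolding W_def V_def using y' by blast
    then have "m \<le> val S d y'" unfolding m_def using finW by simp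
    then show "m \<le> v" using y y' by linarith
  qed
  have "Inf V = m" using mW mle unfolding W_def by (intro cInf_eq_minimum) auto
  moreover obtain x where x: "cpl S \<mu> \<eta> x" "val S d x = m" using mW unfolding W_def V_def by blast
  ultimately show ?thesis
    using mle mW unfolding lift_alt V_def W_def using eq by (intro exI[of _ x]) auto
qed



lemma fuzzy_bounds: "fuzzy_set S \<mu> \<Longrightarrow> u \<in> S \<Longrightarrow> 0 \<le> \<mu> u \<and> \<mu> u \<le> 1"
  unfolding fuzzy_set_def by auto

lemma lift_props:
  assumes fin: "finite S" and ne: "S \<noteq> {}" and d0: "\<forall>u\<in>S. \<forall>v\<in>S. 0 \<le> d u v"
    and fm: "fuzzy_set S \<mu>" "fuzzy_set S \<eta>"
  shows "0 \<le> lift S d \<mu> \<eta>" "lift S d \<mu> \<eta> \<le> 1" "lift S d \<mu> \<eta> \<in> insert 1 (GG S d \<mu> \<eta>)"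
proof -
  have "0 \<le> lift S d \<mu> \<eta> \<and> lift S d \<mu> \<eta> \<le> 1 \<and> lift S d \<mu> \<eta> \<in> insert 1 (GG S d \<mu> \<eta>)"
  proof (cases "fmax \<mu> S = fmax \<eta> S")
    case False then show ?thesis unfolding lift_alt by simp
  next
    case True
    obtain x where x: "cpl S \<mu> \<eta> x" "lift S d \<mu> \<eta> = val S d x" "val S d x \<in> GG S d \<mu> \<eta>"
      using lift_attained[OF fin ne d0 fm True] by blast
    note cx = x(1)[unfolded cpl_iff[OF fin ne]]
    obtain u v where uv: "u \<in> S" "v \<in> S" "val S d x = min (d u v) (x u v)"
      using val_att[OF fin ne] by blast
    have "0 \<le> min (d u v) (x u v)" using d0 cx uv by auto
    moreover have "min (d u v) (x u v) \<le> 1"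
      using cx uv fuzzy_bounds[OF fm(1) uv(1)] by (meson min.coboundedI2 order_trans)
    ultimately show ?thesis using x uv by auto
  qed
  then show "0 \<le> lift S d \<mu> \<eta>" "lift S d \<mu> \<eta> \<le> 1" "lift S d \<mu> \<eta> \<in> insert 1 (GG S d \<mu> \<eta>)"
    by auto
qed

lemma lift_eps:
  assumes fin: "finite S" and ne: "S \<noteq> {}"
    and d1: "\<forall>u\<in>S. \<forall>v\<in>S. 0 \<le> d1 u v" and d2: "\<forall>u\<in>S. \<forall>v\<in>S. 0 \<le> d2 u v"
    and le: "\<forall>u\<in>S. \<forall>v\<in>S. d1 u v \<le> d2 u v + e" and e0: "0 \<le> e"
    and fm: "fuzzy_set S \<mu>" "fuzzy_set S \<eta>"
  shows "lift S d1 \<mu> \<eta> \<le> lift S d2 \<mu> \<eta> + e"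
proof (cases "fmax \<mu> S = fmax \<eta> S")
  case False then show ?thesis unfolding lift_alt using e0 by simp
next
  case True
  obtain x1 where x1: "cpl S \<mu> \<eta> x1" "lift S d1 \<mu> \<eta> = val S d1 x1"
       "\<forall>y. cpl S \<mu> \<eta> y \<longrightarrow> val S d1 x1 \<le> val S d1 y"
    using lift_attained[OF fin ne d1 fm True] by blast
  obtain x2 where x2: "cpl S \<mu> \<eta> x2" "lift S d2 \<mu> \<eta> = val S d2 x2"
    using lift_attained[OF fin ne d2 fm True] by blast
  have "val S d1 x2 \<le> val S d2 x2 + e"
    unfolding val_le_iff[OF fin ne]
  proof (intro ballI)
    fix u v assume uv: "u \<in> S" "v \<in> S"
    have "min (d2 u v) (x2 u v) \<le> val S d2 x2" using val_ge[OF fin uv] .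
    moreover have "d1 u v \<le> d2 u v + e" using le uv by auto
    ultimately show "min (d1 u v) (x2 u v) \<le> val S d2 x2 + e" using e0 by (auto simp: min_def split: if_splits)
  qed
  then show ?thesis using x1 x2 by (metis order_trans)
qed

lemma lift_refl:
  assumes fin: "finite S" and ne: "S \<noteq> {}" and d0: "\<forall>u\<in>S. \<forall>v\<in>S. 0 \<le> d u v"
    and dd: "\<forall>u\<in>S. d u u = 0" and fm: "fuzzy_set S \<mu>"
  shows "lift S d \<mu> \<mu> = 0"
proof -
  obtain x where x: "lift S d \<mu> \<mu> = val S d x"
       "\<forall>y. cpl S \<mu> \<mu> y \<longrightarrow> val S d x \<le> val S d y"
    using lift_attained[OF fin ne d0 fm fm refl] by blast
  define xd where "xd = (\<lambda>u v. if u = v then \<mu> u else (0::real))"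
  have "cpl S \<mu> \<mu> xd" unfolding cpl_iff[OF fin ne] xd_def
    using fuzzy_bounds[OF fm] by auto
  moreover have "val S d xd \<le> 0" unfolding val_le_iff[OF fin ne] xd_def using dd by auto
  ultimately have "lift S d \<mu> \<mu> \<le> 0" using x by (metis order_trans)
  then show ?thesis using lift_props(1)[OF fin ne d0 fm fm] by linarith
qed

lemma lift_tri:
  assumes fin: "finite S" and ne: "S \<noteq> {}" and d0: "\<forall>u\<in>S. \<forall>v\<in>S. 0 \<le> d u v"
    and ul: "\<forall>x\<in>S. \<forall>y\<in>S. \<forall>z\<in>S. d x z \<le> max (d x y) (d y z)"
    and fm: "fuzzy_set S \<mu>" "fuzzy_set S \<eta>" "fuzzy_set S \<nu>"
  shows "lift S d \<mu> \<nu> \<le> max (lift S d \<mu> \<eta>) (lift S d \<eta> \<nu>)"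
proof (cases "fmax \<mu> S = fmax \<eta> S \<and> fmax \<eta> S = fmax \<nu> S")
  case False
  then have "max (lift S d \<mu> \<eta>) (lift S d \<eta> \<nu>) = 1"
    unfolding lift_alt[of S d \<mu> \<eta>] lift_alt[of S d \<eta> \<nu>]
    using lift_props(2)[OF fin ne d0 fm(1) fm(2)] lift_props(2)[OF fin ne d0 fm(2) fm(3)]
    unfolding lift_alt[of S d \<mu> \<eta>] lift_alt[of S d \<eta> \<nu>] by (auto simp: max_def)
  then show ?thesis using lift_props(2)[OF fin ne d0 fm(1) fm(3)] by simp
next
  case True
  obtain x where x: "cpl S \<mu> \<eta> x" "lift S d \<mu> \<eta> = val S d x"
    using lift_attained[OF fin ne d0 fm(1,2)] True by blast
  obtain y where y: "cpl S \<eta> \<nu> y" "lift S d \<eta> \<nu> = val S d y"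
    using lift_attained[OF fin ne d0 fm(2,3)] True by blast
  obtain z where z: "\<forall>w. cpl S \<mu> \<nu> w \<longrightarrow> lift S d \<mu> \<nu> \<le> val S d w"
    using lift_attained[OF fin ne d0 fm(1,3)] True by metis
  note cx = x(1)[unfolded cpl_iff[OF fin ne]]
  note cy = y(1)[unfolded cpl_iff[OF fin ne]]
  define zz where "zz = (\<lambda>u w. Max ((\<lambda>v. min (x u v) (y v w)) ` S))"
  have zge: "\<And>u v w. v \<in> S \<Longrightarrow> min (x u v) (y v w) \<le> zz u w"
    unfolding zz_def using fin by (intro Max_ge) auto
  have zle: "\<And>u w b. (\<forall>v\<in>S. min (x u v) (y v w) \<le> b) \<Longrightarrow> zz u w \<le> b"
    unfolding zz_def using fin ne by (simp add: Max_le_iff)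
  have zatt: "\<And>u w. \<exists>v\<in>S. zz u w = min (x u v) (y v w)"
  proof -
    fix u w
    have "zz u w \<in> (\<lambda>v. min (x u v) (y v w)) ` S" unfolding zz_def using fin ne by (intro Max_in) auto
    then show "\<exists>v\<in>S. zz u w = min (x u v) (y v w)" by auto
  qed
  have cz: "cpl S \<mu> \<nu> zz"
    unfolding cpl_iff[OF fin ne]
  proof (intro conjI ballI)
    fix u w assume uw: "u \<in> S" "w \<in> S"
    have "0 \<le> min (x u u) (y u w)" using cx cy uw by auto
    then show "0 \<le> zz u w" using zge[OF uw(1)] by (meson order_trans)
  next
    fix u assume u: "u \<in> S"
    show "zz u w \<le> \<mu> u" if "w \<in> S" for w
      using cx u by (intro zle ballI) (meson min.coboundedI1 order_trans)
    obtain v0 where v0: "v0 \<in> S" "x u v0 = \<mu> u" using cx u by blast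
    have le1: "\<mu> u \<le> \<eta> v0" using cx u v0 by metis
    obtain w0 where w0: "w0 \<in> S" "y v0 w0 = \<eta> v0" using cy v0 by blast
    have "\<mu> u \<le> zz u w0" using zge[OF v0(1), of u w0] v0 w0 le1 by auto
    moreover have "zz u w0 \<le> \<mu> u" using cx u by (intro zle ballI) (meson min.coboundedI1 order_trans)
    ultimately show "\<exists>w\<in>S. zz u w = \<mu> u" using w0 by force
  next
    fix w assume w: "w \<in> S"
    show "zz u w \<le> \<nu> w" if "u \<in> S" for u
      using cy w by (intro zle ballI) (meson min.coboundedI2 order_trans)
    obtain v0 where v0: "v0 \<in> S" "y v0 w = \<nu> w" using cy w by blast
    have le1: "\<nu> w \<le> \<eta> v0" using cy w v0 by metis
    obtain u0 where u0: "u0 \<in> S" "x u0 v0 = \<eta> v0" using cx v0 by blast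
    have "\<nu> w \<le> zz u0 w" using zge[OF v0(1), of u0 w] v0 u0 le1 by auto
    moreover have "zz u0 w \<le> \<nu> w" using cy w by (intro zle ballI) (meson min.coboundedI2 order_trans)
    ultimately show "\<exists>u\<in>S. zz u w = \<nu> w" using u0 by force
  qed
  have "val S d zz \<le> max (val S d x) (val S d y)"
    unfolding val_le_iff[OF fin ne]
  proof (intro ballI)
    fix u w assume uw: "u \<in> S" "w \<in> S"
    obtain v where v: "v \<in> S" "zz u w = min (x u v) (y v w)" using zatt by blast
    have a: "min (d u v) (x u v) \<le> val S d x" using val_ge[OF fin uw(1) v(1)] .
    have b: "min (d v w) (y v w) \<le> val S d y" using val_ge[OF fin v(1) uw(2)] .
    have c: "d u w \<le> max (d u v) (d v w)" using ul uw v by auto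
    show "min (d u w) (zz u w) \<le> max (val S d x) (val S d y)"
      using a b c v(2) by (auto simp: min_def max_def split: if_splits)
  qed
  then show ?thesis using z cz x y by (metis order_trans)
qed



definition FZ :: "nat set \<Rightarrow> (nat \<Rightarrow> real) set \<Rightarrow> bool" where
  "FZ S Z \<longleftrightarrow> finite Z \<and> (\<forall>\<mu>\<in>Z. fuzzy_set S \<mu>)"

definition nn :: "nat set \<Rightarrow> (nat\<Rightarrow>nat\<Rightarrow>real) \<Rightarrow> bool" where
  "nn S d \<longleftrightarrow> (\<forall>u\<in>S. \<forall>v\<in>S. 0 \<le> d u v)"

definition ultra :: "nat set \<Rightarrow> (nat\<Rightarrow>nat\<Rightarrow>real) \<Rightarrow> bool" where
  "ultra S d \<longleftrightarrow> (\<forall>x\<in>S. \<forall>y\<in>S. \<forall>z\<in>S. d x z \<le> max (d x y) (d y z))"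

lemma MX_le: "finite X \<Longrightarrow> Max (insert (0::real) X) \<le> b \<longleftrightarrow> 0 \<le> b \<and> (\<forall>x\<in>X. x \<le> b)"
  by (simp add: Max_le_iff)

lemma MX_ge: "finite X \<Longrightarrow> x \<in> X \<Longrightarrow> x \<le> Max (insert (0::real) X)"
  by simp

lemma MX_ge0: "finite X \<Longrightarrow> 0 \<le> Max (insert (0::real) X)"
  by simp

lemma MX_in: "finite X \<Longrightarrow> Max (insert (0::real) X) \<in> insert 0 X"
  by (rule Max_in) auto

lemma ls_le: "finite Z \<Longrightarrow> \<eta> \<in> Z \<Longrightarrow> lift_set S d \<mu> Z \<le> lift S d \<mu> \<eta>"
  unfolding lift_set_def by auto

lemma ls_att: "finite Z \<Longrightarrow> Z \<noteq> {} \<Longrightarrow> \<exists>\<eta>\<in>Z. lift_set S d \<mu> Z = lift S d \<mu> \<eta>"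
proof -
  assume a: "finite Z" "Z \<noteq> {}"
  then have "Min ((\<lambda>\<eta>. lift S d \<mu> \<eta>) ` Z) \<in> (\<lambda>\<eta>. lift S d \<mu> \<eta>) ` Z" by (intro Min_in) auto
  then show ?thesis unfolding lift_set_def using a by (simp only: if_False) blast
qed

lemma ls_in: "finite Z \<Longrightarrow> lift_set S d \<mu> Z \<in> insert 1 ((\<lambda>\<eta>. lift S d \<mu> \<eta>) ` Z)"
  using ls_att[of Z S d \<mu>] unfolding lift_set_def[of S d \<mu> Z] by (cases "Z = {}") auto

lemma ls_bounds:
  assumes fin: "finite S" and ne: "S \<noteq> {}" and d0: "nn S d" and Z: "FZ S Z" and fm: "fuzzy_set S \<mu>"
  shows "0 \<le> lift_set S d \<mu> Z" "lift_set S d \<mu> Z \<le> 1"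
proof -
  have "0 \<le> lift_set S d \<mu> Z \<and> lift_set S d \<mu> Z \<le> 1"
  proof (cases "Z = {}")
    case True then show ?thesis unfolding lift_set_def by simp
  next
    case False
    then obtain \<eta> where "\<eta> \<in> Z" "lift_set S d \<mu> Z = lift S d \<mu> \<eta>" using ls_att Z unfolding FZ_def by blast
    then show ?thesis using lift_props(1,2)[OF fin ne d0[unfolded nn_def] fm] Z unfolding FZ_def by auto
  qed
  then show "0 \<le> lift_set S d \<mu> Z" "lift_set S d \<mu> Z \<le> 1" by auto
qed

lemma ls_eps:
  assumes fin: "finite S" and ne: "S \<noteq> {}" and d1: "nn S d1" and d2: "nn S d2"
    and le: "\<forall>u\<in>S. \<forall>v\<in>S. d1 u v \<le> d2 u v + e" and e0: "0 \<le> e"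
    and Z: "FZ S Z" and fm: "fuzzy_set S \<mu>"
  shows "lift_set S d1 \<mu> Z \<le> lift_set S d2 \<mu> Z + e"
proof (cases "Z = {}")
  case True then show ?thesis unfolding lift_set_def using e0 by simp
next
  case False
  then obtain \<eta> where \<eta>: "\<eta> \<in> Z" "lift_set S d2 \<mu> Z = lift S d2 \<mu> \<eta>" using ls_att Z unfolding FZ_def by blast
  have "lift_set S d1 \<mu> Z \<le> lift S d1 \<mu> \<eta>" using ls_le Z \<eta> unfolding FZ_def by blast
  also have "\<dots> \<le> lift S d2 \<mu> \<eta> + e"
    using lift_eps[OF fin ne d1[unfolded nn_def] d2[unfolded nn_def] le e0 fm] Z \<eta> unfolding FZ_def by blast
  finally show ?thesis using \<eta> by simp
qed

lemma ls_tri: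
  assumes fin: "finite S" and ne: "S \<noteq> {}" and d0: "nn S d" and ul: "ultra S d"
    and W: "FZ S W" and fm: "fuzzy_set S \<mu>" "fuzzy_set S \<eta>"
  shows "lift_set S d \<mu> W \<le> max (lift S d \<mu> \<eta>) (lift_set S d \<eta> W)"
proof (cases "W = {}")
  case True
  then show ?thesis using ls_bounds[OF fin ne d0 W fm(1)] unfolding lift_set_def by simp
next
  case False
  then obtain \<nu> where \<nu>: "\<nu> \<in> W" "lift_set S d \<eta> W = lift S d \<eta> \<nu>" using ls_att W unfolding FZ_def by blast
  have "lift_set S d \<mu> W \<le> lift S d \<mu> \<nu>" using ls_le W \<nu> unfolding FZ_def by blast
  also have "\<dots> \<le> max (lift S d \<mu> \<eta>) (lift S d \<eta> \<nu>)"
    using lift_tri[OF fin ne d0[unfolded nn_def] ul[unfolded ultra_def] fm] W \<nu> unfolding FZ_def by blast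
  finally show ?thesis using \<nu> by simp
qed

lemma ls_tri2:
  assumes fin: "finite S" and ne: "S \<noteq> {}" and d0: "nn S d" and ul: "ultra S d"
    and Z: "FZ S Z" and W: "FZ S W" and fm: "fuzzy_set S \<mu>"
  shows "lift_set S d \<mu> W \<le> max (lift_set S d \<mu> Z) (Max (insert 0 ((\<lambda>\<eta>. lift_set S d \<eta> W) ` Z)))"
proof (cases "Z = {}")
  case True
  then show ?thesis using ls_bounds[OF fin ne d0 W fm] unfolding lift_set_def[of S d \<mu> Z] by simp
next
  case False
  then obtain \<eta> where \<eta>: "\<eta> \<in> Z" "lift_set S d \<mu> Z = lift S d \<mu> \<eta>" using ls_att Z unfolding FZ_def by blast
  have f\<eta>: "fuzzy_set S \<eta>" using Z \<eta> unfolding FZ_def by auto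
  have "lift_set S d \<mu> W \<le> max (lift S d \<mu> \<eta>) (lift_set S d \<eta> W)"
    by (rule ls_tri[OF fin ne d0 ul W fm f\<eta>])
  moreover have "lift_set S d \<eta> W \<le> Max (insert 0 ((\<lambda>\<eta>. lift_set S d \<eta> W) ` Z))"
    using Z \<eta> unfolding FZ_def by (intro MX_ge) auto
  ultimately show ?thesis using \<eta> by (auto simp: max_def split: if_splits)
qed

lemma H_alt: "finite Y \<Longrightarrow> finite Z \<Longrightarrow> hausdorff S d Y Z =
  max (Max (insert 0 ((\<lambda>\<mu>. lift_set S d \<mu> Z) ` Y))) (Max (insert 0 ((\<lambda>\<eta>. lift_set S d \<eta> Y) ` Z)))"
  unfolding hausdorff_def by auto

lemma H_sym: "hausdorff S d Y Z = hausdorff S d Z Y"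
  unfolding hausdorff_def by (auto simp: max.commute)

lemma H_bounds:
  assumes fin: "finite S" and ne: "S \<noteq> {}" and d0: "nn S d" and Y: "FZ S Y" and Z: "FZ S Z"
  shows "0 \<le> hausdorff S d Y Z" "hausdorff S d Y Z \<le> 1"
proof -
  have fY: "finite Y" and fZ: "finite Z" using Y Z unfolding FZ_def by auto
  have a: "Max (insert 0 ((\<lambda>\<mu>. lift_set S d \<mu> Z) ` Y)) \<le> 1"
    unfolding MX_le[OF finite_imageI[OF fY]] using ls_bounds(2)[OF fin ne d0 Z] Y unfolding FZ_def by auto
  have b: "Max (insert 0 ((\<lambda>\<mu>. lift_set S d \<mu> Y) ` Z)) \<le> 1"
    unfolding MX_le[OF finite_imageI[OF fZ]] using ls_bounds(2)[OF fin ne d0 Y] Z unfolding FZ_def by auto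
  show "0 \<le> hausdorff S d Y Z" unfolding H_alt[OF fY fZ] using MX_ge0 fY by (simp add: le_max_iff_disj)
  show "hausdorff S d Y Z \<le> 1" unfolding H_alt[OF fY fZ] using a b by simp
qed

lemma H_refl:
  assumes fin: "finite S" and ne: "S \<noteq> {}" and d0: "nn S d" and dd: "\<forall>u\<in>S. d u u = 0" and Y: "FZ S Y"
  shows "hausdorff S d Y Y = 0"
proof -
  have fY: "finite Y" using Y unfolding FZ_def by auto
  have "\<forall>\<mu>\<in>Y. lift_set S d \<mu> Y \<le> 0"
  proof
    fix \<mu> assume m: "\<mu> \<in> Y"
    have "lift_set S d \<mu> Y \<le> lift S d \<mu> \<mu>" using ls_le[OF fY m] .
    also have "\<dots> = 0" using lift_refl[OF fin ne d0[unfolded nn_def] dd] Y m unfolding FZ_def by auto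
    finally show "lift_set S d \<mu> Y \<le> 0" .
  qed
  then have "Max (insert 0 ((\<lambda>\<mu>. lift_set S d \<mu> Y) ` Y)) \<le> 0"
    unfolding MX_le[OF finite_imageI[OF fY]] by auto
  moreover have "0 \<le> Max (insert 0 ((\<lambda>\<mu>. lift_set S d \<mu> Y) ` Y))" using MX_ge0 fY by simp
  ultimately show ?thesis unfolding H_alt[OF fY fY] by simp
qed

lemma H_tri:
  assumes fin: "finite S" and ne: "S \<noteq> {}" and d0: "nn S d" and ul: "ultra S d"
    and Y: "FZ S Y" and Z: "FZ S Z" and W: "FZ S W"
  shows "hausdorff S d Y W \<le> max (hausdorff S d Y Z) (hausdorff S d Z W)"
proof -
  have fY: "finite Y" and fZ: "finite Z" and fW: "finite W" using Y Z W unfolding FZ_def by auto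
  have YZ1: "\<And>\<mu>. \<mu> \<in> Y \<Longrightarrow> lift_set S d \<mu> Z \<le> hausdorff S d Y Z"
    unfolding H_alt[OF fY fZ] using fY by (auto intro: max.coboundedI1 order_trans[OF MX_ge])
  have YZ2: "Max (insert 0 ((\<lambda>\<eta>. lift_set S d \<eta> Y) ` Z)) \<le> hausdorff S d Y Z"
    unfolding H_alt[OF fY fZ] by simp
  have ZW1: "Max (insert 0 ((\<lambda>\<eta>. lift_set S d \<eta> W) ` Z)) \<le> hausdorff S d Z W"
    unfolding H_alt[OF fZ fW] by simp
  have ZW2: "\<And>\<nu>. \<nu> \<in> W \<Longrightarrow> lift_set S d \<nu> Z \<le> hausdorff S d Z W"
    unfolding H_alt[OF fZ fW] using fW by (auto intro: max.coboundedI2 order_trans[OF MX_ge])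
  have p1: "\<forall>\<mu>\<in>Y. lift_set S d \<mu> W \<le> max (hausdorff S d Y Z) (hausdorff S d Z W)"
  proof
    fix \<mu> assume m: "\<mu> \<in> Y"
    have "lift_set S d \<mu> W \<le> max (lift_set S d \<mu> Z) (Max (insert 0 ((\<lambda>\<eta>. lift_set S d \<eta> W) ` Z)))"
      using ls_tri2[OF fin ne d0 ul Z W] Y m unfolding FZ_def by auto
    then show "lift_set S d \<mu> W \<le> max (hausdorff S d Y Z) (hausdorff S d Z W)"
      using YZ1[OF m] ZW1 by (auto simp: max_def split: if_splits)
  qed
  have p2: "\<forall>\<nu>\<in>W. lift_set S d \<nu> Y \<le> max (hausdorff S d Y Z) (hausdorff S d Z W)"
  proof
    fix \<nu> assume m: "\<nu> \<in> W"
    have "lift_set S d \<nu> Y \<le> max (lift_set S d \<nu> Z) (Max (insert 0 ((\<lambda>\<eta>. lift_set S d \<eta> Y) ` Z)))"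
      using ls_tri2[OF fin ne d0 ul Z Y] W m unfolding FZ_def by auto
    then show "lift_set S d \<nu> Y \<le> max (hausdorff S d Y Z) (hausdorff S d Z W)"
      using ZW2[OF m] YZ2 by (auto simp: max_def split: if_splits)
  qed
  have z: "0 \<le> max (hausdorff S d Y Z) (hausdorff S d Z W)"
    using H_bounds(1)[OF fin ne d0 Y Z] by (simp add: le_max_iff_disj)
  show ?thesis unfolding H_alt[OF fY fW] max.bounded_iff
    unfolding MX_le[OF finite_imageI[OF fY]] MX_le[OF finite_imageI[OF fW]]
    using p1 p2 z by auto
qed

lemma H_eps:
  assumes fin: "finite S" and ne: "S \<noteq> {}" and d1: "nn S d1" and d2: "nn S d2"
    and le: "\<forall>u\<in>S. \<forall>v\<in>S. d1 u v \<le> d2 u v + e" and e0: "0 \<le> e"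
    and Y: "FZ S Y" and Z: "FZ S Z"
  shows "hausdorff S d1 Y Z \<le> hausdorff S d2 Y Z + e"
proof -
  have fY: "finite Y" and fZ: "finite Z" using Y Z unfolding FZ_def by auto
  have a: "\<forall>\<mu>\<in>Y. lift_set S d1 \<mu> Z \<le> hausdorff S d2 Y Z + e"
  proof
    fix \<mu> assume m: "\<mu> \<in> Y"
    have "lift_set S d1 \<mu> Z \<le> lift_set S d2 \<mu> Z + e"
      using ls_eps[OF fin ne d1 d2 le e0 Z] Y m unfolding FZ_def by auto
    moreover have "lift_set S d2 \<mu> Z \<le> hausdorff S d2 Y Z"
      unfolding H_alt[OF fY fZ] using fY m by (auto intro: max.coboundedI1 order_trans[OF MX_ge])
    ultimately show "lift_set S d1 \<mu> Z \<le> hausdorff S d2 Y Z + e" by simp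
  qed
  have b: "\<forall>\<mu>\<in>Z. lift_set S d1 \<mu> Y \<le> hausdorff S d2 Y Z + e"
  proof
    fix \<mu> assume m: "\<mu> \<in> Z"
    have "lift_set S d1 \<mu> Y \<le> lift_set S d2 \<mu> Y + e"
      using ls_eps[OF fin ne d1 d2 le e0 Y] Z m unfolding FZ_def by auto
    moreover have "lift_set S d2 \<mu> Y \<le> hausdorff S d2 Y Z"
      unfolding H_alt[OF fY fZ] using fZ m by (auto intro: max.coboundedI2 order_trans[OF MX_ge])
    ultimately show "lift_set S d1 \<mu> Y \<le> hausdorff S d2 Y Z + e" by simp
  qed
  have z: "0 \<le> hausdorff S d2 Y Z + e" using H_bounds(1)[OF fin ne d2 Y Z] e0 by simp
  show ?thesis unfolding H_alt[OF fY fZ, of S d1] max.bounded_iff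
    unfolding MX_le[OF finite_imageI[OF fY]] MX_le[OF finite_imageI[OF fZ]]
    using a b z by auto
qed

lemma H_in:
  assumes "finite Y" "finite Z"
  shows "hausdorff S d Y Z \<in> insert 0 ((\<lambda>\<mu>. lift_set S d \<mu> Z) ` Y \<union> (\<lambda>\<eta>. lift_set S d \<eta> Y) ` Z)"
  using MX_in[OF finite_imageI[OF assms(1)], of "\<lambda>\<mu>. lift_set S d \<mu> Z"]
    MX_in[OF finite_imageI[OF assms(2)], of "\<lambda>\<eta>. lift_set S d \<eta> Y"]
  unfolding H_alt[OF assms] by (auto simp: max_def)



definition CC :: "nat set \<Rightarrow> 'a set \<Rightarrow> (nat \<Rightarrow> 'a \<Rightarrow> (nat \<Rightarrow> real) set) \<Rightarrow> real set" where
  "CC S A \<delta> = {c. c = 0 \<or> c = 1 \<or> (\<exists>s\<in>S. \<exists>a\<in>A. \<exists>\<mu>\<in>\<delta> s a. \<exists>u\<in>S. c = \<mu> u)}"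

lemma pu_parts:
  assumes "pseudo_ultrametric S d"
  shows "nn S d" "ultra S d" "\<forall>u\<in>S. d u u = 0"
  using assms unfolding pseudo_ultrametric_def nn_def ultra_def by auto

lemma max_mult_nonneg: "0 \<le> (g::real) \<Longrightarrow> g * max a b = max (g*a) (g*b)"
proof (cases "a \<le> b")
  case True
  assume g: "0 \<le> g"
  then have "g*a \<le> g*b" using True by (simp add: mult_left_mono)
  then show ?thesis using True by (simp add: max_absorb2)
next
  case False
  assume g: "0 \<le> g"
  then have "g*b \<le> g*a" using False by (simp add: mult_left_mono)
  then show ?thesis using False by (simp add: max_absorb1)
qed

lemma Delta_pu:
  assumes fin: "finite S" and ne: "S \<noteq> {}" and finA: "finite A"
    and FZs: "\<forall>s\<in>S. \<forall>a\<in>A. FZ S (\<delta> s a)" and pu: "pseudo_ultrametric S d"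
    and g0: "0 \<le> \<gamma>" and g1: "\<gamma> \<le> 1"
  shows "pseudo_ultrametric S (Delta S A \<delta> \<gamma> d)"
proof -
  note d0 = pu_parts(1)[OF pu] and ul = pu_parts(2)[OF pu] and dd = pu_parts(3)[OF pu]
  define M where "M = (\<lambda>s t. Max (insert 0 ((\<lambda>a. hausdorff S d (\<delta> s a) (\<delta> t a)) ` A)))"
  have D: "\<And>s t. s \<in> S \<Longrightarrow> t \<in> S \<Longrightarrow> Delta S A \<delta> \<gamma> d s t = \<gamma> * M s t"
    unfolding Delta_def M_def by simp
  have M01: "\<And>s t. s \<in> S \<Longrightarrow> t \<in> S \<Longrightarrow> 0 \<le> M s t \<and> M s t \<le> 1"
  proof -
    fix s t assume st: "s \<in> S" "t \<in> S"
    show "0 \<le> M s t \<and> M s t \<le> 1" unfolding M_def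
      using MX_ge0 finA H_bounds(2)[OF fin ne d0] FZs st by (simp add: MX_le)
  qed
  have Mdiag: "\<And>s. s \<in> S \<Longrightarrow> M s s = 0"
  proof -
    fix s assume s: "s \<in> S"
    have "M s s \<le> 0" unfolding M_def MX_le[OF finite_imageI[OF finA]]
      using H_refl[OF fin ne d0 dd] FZs s by simp
    then show "M s s = 0" using M01[OF s s] by simp
  qed
  have Msym: "\<And>s t. M s t = M t s" unfolding M_def by (simp add: H_sym)
  have Mul: "\<And>x y z. x \<in> S \<Longrightarrow> y \<in> S \<Longrightarrow> z \<in> S \<Longrightarrow> M x z \<le> max (M x y) (M y z)"
  proof -
    fix x y z assume xyz: "x \<in> S" "y \<in> S" "z \<in> S"
    have "\<forall>a\<in>A. hausdorff S d (\<delta> x a) (\<delta> z a) \<le> max (M x y) (M y z)"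
    proof
      fix a assume a: "a \<in> A"
      have "hausdorff S d (\<delta> x a) (\<delta> z a) \<le> max (hausdorff S d (\<delta> x a) (\<delta> y a)) (hausdorff S d (\<delta> y a) (\<delta> z a))"
        using H_tri[OF fin ne d0 ul] FZs xyz a by simp
      moreover have "hausdorff S d (\<delta> x a) (\<delta> y a) \<le> M x y" unfolding M_def using finA a by simp
      moreover have "hausdorff S d (\<delta> y a) (\<delta> z a) \<le> M y z" unfolding M_def using finA a by simp
      ultimately show "hausdorff S d (\<delta> x a) (\<delta> z a) \<le> max (M x y) (M y z)"
        by (auto simp: max_def split: if_splits)
    qed
    moreover have "0 \<le> max (M x y) (M y z)" using M01[OF xyz(1,2)] by (simp add: le_max_iff_disj)
    moreover have "M x z = Max (insert 0 ((\<lambda>a. hausdorff S d (\<delta> x a) (\<delta> z a)) ` A))"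
      unfolding M_def by simp
    ultimately show "M x z \<le> max (M x y) (M y z)" using MX_le[OF finite_imageI[OF finA]]
      by simp
  qed
  show ?thesis unfolding pseudo_ultrametric_def
  proof (intro conjI ballI allI impI)
    fix x y assume xy: "x \<in> S" "y \<in> S"
    show "0 \<le> Delta S A \<delta> \<gamma> d x y" using D[OF xy] M01[OF xy] g0 by simp
    show "Delta S A \<delta> \<gamma> d x y \<le> 1" using D[OF xy] M01[OF xy] g0 g1 by (simp add: mult_le_one)
    show "Delta S A \<delta> \<gamma> d x y = Delta S A \<delta> \<gamma> d y x" using D xy Msym by simp
  next
    fix x assume "x \<in> S" then show "Delta S A \<delta> \<gamma> d x x = 0" using D Mdiag by simp
  next
    fix x y z assume xyz: "x \<in> S" "y \<in> S" "z \<in> S"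
    have "\<gamma> * M x z \<le> \<gamma> * max (M x y) (M y z)" using Mul[OF xyz] g0 by (simp add: mult_left_mono)
    also have "\<dots> = max (\<gamma> * M x y) (\<gamma> * M y z)" using g0 by (rule max_mult_nonneg)
    finally show "Delta S A \<delta> \<gamma> d x z \<le> max (Delta S A \<delta> \<gamma> d x y) (Delta S A \<delta> \<gamma> d y z)"
      using D xyz by simp
  next
    fix x y assume "x \<notin> S \<or> y \<notin> S" then show "Delta S A \<delta> \<gamma> d x y = 0" unfolding Delta_def by auto
  qed
qed

lemma Delta_eps:
  assumes fin: "finite S" and ne: "S \<noteq> {}" and finA: "finite A"
    and FZs: "\<forall>s\<in>S. \<forall>a\<in>A. FZ S (\<delta> s a)" and d1: "nn S d1" and d2: "nn S d2"
    and le: "\<forall>u\<in>S. \<forall>v\<in>S. d1 u v \<le> d2 u v + e" and e0: "0 \<le> e" and g0: "0 \<le> \<gamma>"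
  shows "\<forall>s\<in>S. \<forall>t\<in>S. Delta S A \<delta> \<gamma> d1 s t \<le> Delta S A \<delta> \<gamma> d2 s t + \<gamma> * e"
proof (intro ballI)
  fix s t assume st: "s \<in> S" "t \<in> S"
  define M2 where "M2 = Max (insert 0 ((\<lambda>a. hausdorff S d2 (\<delta> s a) (\<delta> t a)) ` A))"
  have "Max (insert 0 ((\<lambda>a. hausdorff S d1 (\<delta> s a) (\<delta> t a)) ` A)) \<le> M2 + e"
    unfolding MX_le[OF finite_imageI[OF finA]]
  proof (intro conjI ballI)
    show "0 \<le> M2 + e" unfolding M2_def using MX_ge0[OF finite_imageI[OF finA]] e0 by (simp add: add_nonneg_nonneg)
  next
    fix h assume "h \<in> (\<lambda>a. hausdorff S d1 (\<delta> s a) (\<delta> t a)) ` A"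
    then obtain a where a: "a \<in> A" "h = hausdorff S d1 (\<delta> s a) (\<delta> t a)" by blast
    have "h \<le> hausdorff S d2 (\<delta> s a) (\<delta> t a) + e" using a H_eps[OF fin ne d1 d2 le e0] FZs st by simp
    moreover have "hausdorff S d2 (\<delta> s a) (\<delta> t a) \<le> M2" unfolding M2_def using finA a by simp
    ultimately show "h \<le> M2 + e" by simp
  qed
  then have "\<gamma> * Max (insert 0 ((\<lambda>a. hausdorff S d1 (\<delta> s a) (\<delta> t a)) ` A)) \<le> \<gamma> * (M2 + e)"
    using g0 by (simp add: mult_left_mono)
  then show "Delta S A \<delta> \<gamma> d1 s t \<le> Delta S A \<delta> \<gamma> d2 s t + \<gamma> * e"
    unfolding Delta_def M2_def using st by (simp add: distrib_left)
qed

lemma Delta_in: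
  assumes fin: "finite S" and ne: "S \<noteq> {}" and finA: "finite A"
    and FZs: "\<forall>s\<in>S. \<forall>a\<in>A. FZ S (\<delta> s a)" and d0: "nn S d" and st: "s \<in> S" "t \<in> S"
  shows "Delta S A \<delta> \<gamma> d s t \<in> (\<lambda>c. \<gamma> * c) ` (CC S A \<delta> \<union> (\<lambda>(u,v). d u v) ` (S \<times> S))"
proof -
  define T where "T = CC S A \<delta> \<union> (\<lambda>(u,v). d u v) ` (S \<times> S)"
  have T0: "0 \<in> T" "1 \<in> T" unfolding T_def CC_def by auto
  have Tmu: "\<And>s' a \<mu> u. s' \<in> S \<Longrightarrow> a \<in> A \<Longrightarrow> \<mu> \<in> \<delta> s' a \<Longrightarrow> u \<in> S \<Longrightarrow> \<mu> u \<in> T"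
    unfolding T_def CC_def by blast
  have Td: "\<And>u v. u \<in> S \<Longrightarrow> v \<in> S \<Longrightarrow> d u v \<in> T" unfolding T_def by force
  have Hin: "\<forall>a\<in>A. hausdorff S d (\<delta> s a) (\<delta> t a) \<in> T"
  proof
    fix a assume a: "a \<in> A"
    define Y where "Y = \<delta> s a"
    define Z where "Z = \<delta> t a"
    have FY: "FZ S Y" "FZ S Z" unfolding Y_def Z_def using FZs st a by auto
    have YZ: "\<And>\<mu>. \<mu> \<in> Y \<union> Z \<Longrightarrow> (\<exists>s'\<in>S. \<mu> \<in> \<delta> s' a)" unfolding Y_def Z_def using st by auto
    have lin: "\<And>\<mu> \<eta>. \<mu> \<in> Y \<union> Z \<Longrightarrow> \<eta> \<in> Y \<union> Z \<Longrightarrow> lift S d \<mu> \<eta> \<in> T"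
    proof -
      fix \<mu> \<eta> assume m: "\<mu> \<in> Y \<union> Z" and n: "\<eta> \<in> Y \<union> Z"
      have fm: "fuzzy_set S \<mu>" "fuzzy_set S \<eta>" using m n FY unfolding FZ_def by auto
      have "lift S d \<mu> \<eta> \<in> insert 1 (GG S d \<mu> \<eta>)"
        using lift_props(3)[OF fin ne d0[unfolded nn_def] fm] .
      then show "lift S d \<mu> \<eta> \<in> T" unfolding GG_def
        using T0 Td YZ[OF m] YZ[OF n] Tmu a by auto
    qed
    have lsin: "\<And>\<mu> W. \<mu> \<in> Y \<union> Z \<Longrightarrow> W \<subseteq> Y \<union> Z \<Longrightarrow> finite W \<Longrightarrow> lift_set S d \<mu> W \<in> T"
    proof -
      fix \<mu> W assume m: "\<mu> \<in> Y \<union> Z" and W: "W \<subseteq> Y \<union> Z" "finite W"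
      show "lift_set S d \<mu> W \<in> T" using ls_in[OF W(2), of S d \<mu>] lin[OF m] W T0 by auto
    qed
    have "hausdorff S d Y Z \<in> T"
      using H_in[of Y Z S d] FY lsin T0 unfolding FZ_def by auto
    then show "hausdorff S d (\<delta> s a) (\<delta> t a) \<in> T" unfolding Y_def Z_def .
  qed
  have "Max (insert 0 ((\<lambda>a. hausdorff S d (\<delta> s a) (\<delta> t a)) ` A)) \<in> T"
    using MX_in[OF finite_imageI[OF finA], of "\<lambda>a. hausdorff S d (\<delta> s a) (\<delta> t a)"] Hin T0 by auto
  then show ?thesis unfolding Delta_def T_def using st by auto
qed



definition Dset :: "nat set \<Rightarrow> 'a set \<Rightarrow> (nat \<Rightarrow> 'a \<Rightarrow> (nat \<Rightarrow> real) set) \<Rightarrow> real \<Rightarrow> (nat \<Rightarrow> nat \<Rightarrow> real) set" where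
  "Dset S A \<delta> \<gamma> = {d. pseudo_ultrametric S d \<and> (\<forall>x\<in>S. \<forall>y\<in>S. d x y \<le> Delta S A \<delta> \<gamma> d x y)}"

definition dstar :: "nat set \<Rightarrow> 'a set \<Rightarrow> (nat \<Rightarrow> 'a \<Rightarrow> (nat \<Rightarrow> real) set) \<Rightarrow> real \<Rightarrow> (nat \<Rightarrow> nat \<Rightarrow> real)" where
  "dstar S A \<delta> \<gamma> = (\<lambda>x y. if x \<in> S \<and> y \<in> S then (SUP d\<in>Dset S A \<delta> \<gamma>. d x y) else 0)"

lemma Delta_mono:
  assumes fin: "finite S" and ne: "S \<noteq> {}" and finA: "finite A"
    and FZs: "\<forall>s\<in>S. \<forall>a\<in>A. FZ S (\<delta> s a)" and d1: "nn S d1" and d2: "nn S d2"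
    and le: "\<forall>u\<in>S. \<forall>v\<in>S. d1 u v \<le> d2 u v" and g0: "0 \<le> \<gamma>"
  shows "\<forall>s\<in>S. \<forall>t\<in>S. Delta S A \<delta> \<gamma> d1 s t \<le> Delta S A \<delta> \<gamma> d2 s t"
  using Delta_eps[OF fin ne finA FZs d1 d2 _ _ g0, of 0] le by simp

lemma dstar_fix:
  assumes fin: "finite S" and ne: "S \<noteq> {}" and finA: "finite A"
    and FZs: "\<forall>s\<in>S. \<forall>a\<in>A. FZ S (\<delta> s a)" and g0: "0 \<le> \<gamma>" and g1: "\<gamma> \<le> 1"
  shows "pseudo_ultrametric S (dstar S A \<delta> \<gamma>)" "Delta S A \<delta> \<gamma> (dstar S A \<delta> \<gamma>) = dstar S A \<delta> \<gamma>"
proof -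
  define D where "D = Dset S A \<delta> \<gamma>"
  define ds where "ds = dstar S A \<delta> \<gamma>"
  have zpu: "pseudo_ultrametric S (\<lambda>x y. 0)" unfolding pseudo_ultrametric_def by simp
  have zD: "(\<lambda>x y. 0) \<in> D" unfolding D_def Dset_def
    using Delta_pu[OF fin ne finA FZs zpu g0 g1] unfolding pseudo_ultrametric_def by auto
  have neD: "D \<noteq> {}" using zD by blast
  have bdd: "\<And>x y. x \<in> S \<Longrightarrow> y \<in> S \<Longrightarrow> bdd_above ((\<lambda>d. d x y) ` D)"
    unfolding D_def Dset_def pseudo_ultrametric_def by (intro bdd_aboveI2[where M=1]) auto
  have dsv: "\<And>x y. x \<in> S \<Longrightarrow> y \<in> S \<Longrightarrow> ds x y = (SUP d\<in>D. d x y)"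
    unfolding ds_def dstar_def D_def by simp
  have ge: "d x y \<le> ds x y" if "d \<in> D" "x \<in> S" "y \<in> S" for d x y
    using cSUP_upper[OF that(1) bdd[OF that(2,3)]] dsv[OF that(2,3)] by simp
  have lub: "\<And>x y b. x \<in> S \<Longrightarrow> y \<in> S \<Longrightarrow> (\<forall>d\<in>D. d x y \<le> b) \<Longrightarrow> ds x y \<le> b"
    using dsv neD by (simp add: cSUP_least)
  have puD: "\<And>d. d \<in> D \<Longrightarrow> pseudo_ultrametric S d" unfolding D_def Dset_def by auto
  have pus: "pseudo_ultrametric S ds"
    unfolding pseudo_ultrametric_def
  proof (intro conjI ballI allI impI)
    fix x y assume xy: "x \<in> S" "y \<in> S"
    show "0 \<le> ds x y" using ge[OF zD xy] by simp
    show "ds x y \<le> 1" using lub[OF xy] puD xy unfolding pseudo_ultrametric_def by auto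
    have "ds x y \<le> ds y x" using lub[OF xy] ge[OF _ xy(2,1)] puD xy
      unfolding pseudo_ultrametric_def by metis
    moreover have "ds y x \<le> ds x y" using lub[OF xy(2,1)] ge[OF _ xy] puD xy
      unfolding pseudo_ultrametric_def by metis
    ultimately show "ds x y = ds y x" by simp
  next
    fix x assume x: "x \<in> S"
    have "\<forall>d\<in>D. d x x \<le> 0"
    proof
      fix d assume "d \<in> D"
      then have "pseudo_ultrametric S d" by (rule puD)
      then show "d x x \<le> 0" using x unfolding pseudo_ultrametric_def by auto
    qed
    then have "ds x x \<le> 0" by (rule lub[OF x x])
    then show "ds x x = 0" using ge[OF zD x x] by simp
  next
    fix x y z assume xyz: "x \<in> S" "y \<in> S" "z \<in> S"
    show "ds x z \<le> max (ds x y) (ds y z)"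
    proof (rule lub[OF xyz(1,3)], intro ballI)
      fix d assume d: "d \<in> D"
      have "d x z \<le> max (d x y) (d y z)" using puD[OF d] xyz unfolding pseudo_ultrametric_def by auto
      moreover have "d x y \<le> ds x y" "d y z \<le> ds y z" using ge[OF d] xyz by auto
      ultimately show "d x z \<le> max (ds x y) (ds y z)" by (auto simp: max_def split: if_splits)
    qed
  next
    fix x y assume "x \<notin> S \<or> y \<notin> S" then show "ds x y = 0" unfolding ds_def dstar_def by auto
  qed
  have nnD: "\<And>d. d \<in> D \<Longrightarrow> nn S d" using puD pu_parts(1) by blast
  have nns: "nn S ds" using pus pu_parts(1) by blast
  have post: "\<forall>x\<in>S. \<forall>y\<in>S. ds x y \<le> Delta S A \<delta> \<gamma> ds x y"
  proof (intro ballI)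
    fix x y assume xy: "x \<in> S" "y \<in> S"
    show "ds x y \<le> Delta S A \<delta> \<gamma> ds x y"
    proof (rule lub[OF xy], intro ballI)
      fix d assume d: "d \<in> D"
      have "d x y \<le> Delta S A \<delta> \<gamma> d x y" using d xy unfolding D_def Dset_def by auto
      also have "\<dots> \<le> Delta S A \<delta> \<gamma> ds x y"
        using Delta_mono[OF fin ne finA FZs nnD[OF d] nns _ g0] ge[OF d] xy by auto
      finally show "d x y \<le> Delta S A \<delta> \<gamma> ds x y" .
    qed
  qed
  have puDs: "pseudo_ultrametric S (Delta S A \<delta> \<gamma> ds)" using Delta_pu[OF fin ne finA FZs pus g0 g1] .
  have "Delta S A \<delta> \<gamma> ds \<in> D" unfolding D_def Dset_def
    using puDs Delta_mono[OF fin ne finA FZs nns pu_parts(1)[OF puDs] post g0] by auto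
  then have le2: "\<forall>x\<in>S. \<forall>y\<in>S. Delta S A \<delta> \<gamma> ds x y \<le> ds x y" using ge by auto
  have "Delta S A \<delta> \<gamma> ds = ds"
  proof (intro ext)
    fix x y show "Delta S A \<delta> \<gamma> ds x y = ds x y"
    proof (cases "x \<in> S \<and> y \<in> S")
      case True then show ?thesis using post le2 by (meson order_antisym)
    next
      case False then show ?thesis using puDs pus unfolding pseudo_ultrametric_def by auto
    qed
  qed
  then show "pseudo_ultrametric S (dstar S A \<delta> \<gamma>)" "Delta S A \<delta> \<gamma> (dstar S A \<delta> \<gamma>) = dstar S A \<delta> \<gamma>"
    using pus unfolding ds_def by auto
qed

lemma fix_unique:
  assumes fin: "finite S" and ne: "S \<noteq> {}" and finA: "finite A"
    and FZs: "\<forall>s\<in>S. \<forall>a\<in>A. FZ S (\<delta> s a)" and g0: "0 \<le> \<gamma>" and g1: "\<gamma> < 1"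
    and p1: "pseudo_ultrametric S d1" and f1: "Delta S A \<delta> \<gamma> d1 = d1"
    and p2: "pseudo_ultrametric S d2" and f2: "Delta S A \<delta> \<gamma> d2 = d2"
  shows "d1 = d2"
proof -
  define e where "e = Max ((\<lambda>(u,v). \<bar>d1 u v - d2 u v\<bar>) ` (S \<times> S))"
  have finP: "finite ((\<lambda>(u,v). \<bar>d1 u v - d2 u v\<bar>) ` (S \<times> S))" using fin by auto
  have eg: "\<And>u v. u \<in> S \<Longrightarrow> v \<in> S \<Longrightarrow> \<bar>d1 u v - d2 u v\<bar> \<le> e"
    unfolding e_def using finP by (intro Max_ge) auto
  obtain u0 where u0: "u0 \<in> S" using ne by blast
  have e0: "0 \<le> e" using eg[OF u0 u0] by linarith
  have l1': "d1 u v \<le> d2 u v + e" if "u \<in> S" "v \<in> S" for u v using eg[OF that] by linarith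
  have l2': "d2 u v \<le> d1 u v + e" if "u \<in> S" "v \<in> S" for u v using eg[OF that] by linarith
  have l1: "\<forall>u\<in>S. \<forall>v\<in>S. d1 u v \<le> d2 u v + e" using l1' by blast
  have l2: "\<forall>u\<in>S. \<forall>v\<in>S. d2 u v \<le> d1 u v + e" using l2' by blast
  have n1: "nn S d1" and n2: "nn S d2" using pu_parts(1) p1 p2 by auto
  have a: "\<forall>s\<in>S. \<forall>t\<in>S. d1 s t \<le> d2 s t + \<gamma> * e"
    using Delta_eps[OF fin ne finA FZs n1 n2 l1 e0 g0] f1 f2 by simp
  have b: "\<forall>s\<in>S. \<forall>t\<in>S. d2 s t \<le> d1 s t + \<gamma> * e"
    using Delta_eps[OF fin ne finA FZs n2 n1 l2 e0 g0] f1 f2 by simp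
  have c: "\<bar>d1 u v - d2 u v\<bar> \<le> \<gamma> * e" if "u \<in> S" "v \<in> S" for u v
  proof -
    have "d1 u v \<le> d2 u v + \<gamma> * e" "d2 u v \<le> d1 u v + \<gamma> * e" using a b that by auto
    then show ?thesis by linarith
  qed
  have "e \<in> (\<lambda>(u,v). \<bar>d1 u v - d2 u v\<bar>) ` (S \<times> S)" unfolding e_def using finP ne by (intro Max_in) auto
  then obtain pp where pp: "pp \<in> S \<times> S" "e = (\<lambda>(u,v). \<bar>d1 u v - d2 u v\<bar>) pp" by (rule imageE)
  obtain u v where "pp = (u, v)" by (cases pp)
  then have uv: "u \<in> S" "v \<in> S" "e = \<bar>d1 u v - d2 u v\<bar>" using pp by auto
  have "e \<le> \<gamma> * e" using c[OF uv(1,2)] uv(3) by linarith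
  then have "e \<le> 0" using g1 e0 by (smt (verit) mult_less_cancel_right2)
  then have eq: "\<And>u v. u \<in> S \<Longrightarrow> v \<in> S \<Longrightarrow> d1 u v = d2 u v" using eg by fastforce
  show ?thesis
  proof (intro ext)
    fix x y show "d1 x y = d2 x y"
      using eq p1 p2 unfolding pseudo_ultrametric_def by (cases "x \<in> S \<and> y \<in> S") auto
  qed
qed

lemma fuzzy_dist_eq:
  assumes fin: "finite S" and ne: "S \<noteq> {}" and finA: "finite A"
    and FZs: "\<forall>s\<in>S. \<forall>a\<in>A. FZ S (\<delta> s a)" and g0: "0 \<le> \<gamma>" and g1: "\<gamma> < 1"
  shows "fuzzy_dist S A \<delta> \<gamma> = dstar S A \<delta> \<gamma>"
proof -
  note F = dstar_fix[OF fin ne finA FZs g0 less_imp_le[OF g1]]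
  show ?thesis unfolding fuzzy_dist_def
  proof (rule the_equality)
    show "pseudo_ultrametric S (dstar S A \<delta> \<gamma>) \<and> Delta S A \<delta> \<gamma> (dstar S A \<delta> \<gamma>) = dstar S A \<delta> \<gamma> \<and>
      (\<forall>d'. pseudo_ultrametric S d' \<and> Delta S A \<delta> \<gamma> d' = d' \<longrightarrow>
         (\<forall>x\<in>S. \<forall>y\<in>S. dstar S A \<delta> \<gamma> x y \<le> d' x y))"
    proof (intro conjI allI impI ballI)
      show "pseudo_ultrametric S (dstar S A \<delta> \<gamma>)" "Delta S A \<delta> \<gamma> (dstar S A \<delta> \<gamma>) = dstar S A \<delta> \<gamma>"
        using F by auto
      fix d' x y assume d': "pseudo_ultrametric S d' \<and> Delta S A \<delta> \<gamma> d' = d'"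
      then have "dstar S A \<delta> \<gamma> = d'" using F fix_unique[OF fin ne finA FZs g0 g1] by auto
      then show "dstar S A \<delta> \<gamma> x y \<le> d' x y" by simp
    qed
  next
    fix d assume "pseudo_ultrametric S d \<and> Delta S A \<delta> \<gamma> d = d \<and>
      (\<forall>d'. pseudo_ultrametric S d' \<and> Delta S A \<delta> \<gamma> d' = d' \<longrightarrow> (\<forall>x\<in>S. \<forall>y\<in>S. d x y \<le> d' x y))"
    then show "d = dstar S A \<delta> \<gamma>" using F fix_unique[OF fin ne finA FZs g0 g1] by auto
  qed
qed

lemma rank:
  assumes finP: "finite P" and f0: "\<forall>p\<in>P. 0 \<le> f p" and g0: "0 < \<gamma>" and g1: "\<gamma> < (1::real)"
    and C0: "0 \<in> C" and rec: "\<forall>p\<in>P. f p \<in> (\<lambda>c. \<gamma> * c) ` (C \<union> f ` P)"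
  shows "\<forall>p\<in>P. \<exists>j c. 1 \<le> j \<and> j \<le> card P \<and> c \<in> C \<and> f p = \<gamma> ^ j * c"
proof -
  have main: "\<forall>p\<in>P. card {q\<in>P. f p \<le> f q} = n \<longrightarrow> (\<exists>j c. 1 \<le> j \<and> j \<le> n \<and> c \<in> C \<and> f p = \<gamma> ^ j * c)" for n
  proof (induction n rule: less_induct)
    case (less n)
    show ?case
    proof (intro ballI impI)
      fix p assume p: "p \<in> P" and cn: "card {q\<in>P. f p \<le> f q} = n"
      have finp: "finite {q\<in>P. f p \<le> f q}" using finP by auto
      have n1: "1 \<le> n" using cn p finp by (metis (mono_tags, lifting) card_0_eq empty_iff less_one
            linorder_not_less mem_Collect_eq order_refl)
      obtain c' where c': "c' \<in> C \<union> f ` P" "f p = \<gamma> * c'" using rec p by blast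
      show "\<exists>j c. 1 \<le> j \<and> j \<le> n \<and> c \<in> C \<and> f p = \<gamma> ^ j * c"
      proof (cases "c' \<in> C")
        case True then show ?thesis using c' n1 by (intro exI[of _ 1] exI[of _ c']) auto
      next
        case False
        then obtain q where q: "q \<in> P" "f p = \<gamma> * f q" using c' by blast
        show ?thesis
        proof (cases "f p = 0")
          case True then show ?thesis using C0 n1 by (intro exI[of _ 1] exI[of _ 0]) auto
        next
          case False
          then have fp: "0 < f p" using f0 p by force
          then have fq: "0 < f q" using q g0 by (metis mult_pos_pos zero_less_mult_pos)
          have "f p < f q" using q fq g1 by simp
          then have pin: "p \<in> {r\<in>P. f p \<le> f r}" "p \<notin> {r\<in>P. f q \<le> f r}" using p by auto
          have sub: "{r\<in>P. f q \<le> f r} \<subset> {r\<in>P. f p \<le> f r}"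
          proof (rule psubsetI)
            show "{r\<in>P. f q \<le> f r} \<subseteq> {r\<in>P. f p \<le> f r}" using \<open>f p < f q\<close> by auto
            show "{r\<in>P. f q \<le> f r} \<noteq> {r\<in>P. f p \<le> f r}"
            proof
              assume "{r\<in>P. f q \<le> f r} = {r\<in>P. f p \<le> f r}"
              then show False using pin by simp
            qed
          qed
          then have lt: "card {r\<in>P. f q \<le> f r} < n" using cn finp psubset_card_mono by metis
          obtain j c where jc: "1 \<le> j" "j \<le> card {r\<in>P. f q \<le> f r}" "c \<in> C" "f q = \<gamma> ^ j * c"
            using less[OF lt] q by blast
          show ?thesis using jc q lt by (intro exI[of _ "Suc j"] exI[of _ c]) auto
        qed
      qed
    qed
  qed
  show ?thesis
  proof
    fix p assume p: "p \<in> P"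
    have "card {q\<in>P. f p \<le> f q} \<le> card P" using finP by (intro card_mono) auto
    moreover obtain j c where "1 \<le> j" "j \<le> card {q\<in>P. f p \<le> f q}" "c \<in> C" "f p = \<gamma> ^ j * c"
      using main[of "card {q\<in>P. f p \<le> f q}"] p by blast
    ultimately show "\<exists>j c. 1 \<le> j \<and> j \<le> card P \<and> c \<in> C \<and> f p = \<gamma> ^ j * c"
      by (intro exI[of _ j] exI[of _ c]) auto
  qed
qed



lemma CC_bits:
  assumes fts: "fts S A \<delta>" and rat: "rational_fts S A \<delta>" and c: "c \<in> CC S A \<delta>"
  shows "\<exists>qc. c = of_rat qc \<and> rat_bits qc \<le> fts_size S A \<delta> + 3"
proof -
  have fin: "finite S" and finA: "finite A" and fd: "\<forall>s\<in>S. \<forall>a\<in>A. finite (\<delta> s a) \<and> (\<forall>\<mu>\<in>\<delta> s a. fuzzy_set S \<mu>)"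
    using fts unfolding fts_def by auto
  consider "c = 0" | "c = 1" | "\<exists>s\<in>S. \<exists>a\<in>A. \<exists>\<mu>\<in>\<delta> s a. \<exists>u\<in>S. c = \<mu> u"
    using c unfolding CC_def by blast
  then show ?thesis
  proof cases
    case 1 then show ?thesis by (intro exI[of _ 0]) (simp add: rat_bits_zero)
  next
    case 2 then show ?thesis by (intro exI[of _ 1]) (simp add: rat_bits_one)
  next
    case 3
    then obtain s a \<mu> u where sa: "s \<in> S" "a \<in> A" "\<mu> \<in> \<delta> s a" "u \<in> S" "c = \<mu> u" by blast
    have "\<mu> u \<in> \<rat>" using rat sa unfolding rational_fts_def by auto
    then obtain qc where qc: "\<mu> u = of_rat qc" by (rule Rats_cases) auto
    show ?thesis
    proof (cases "qc = 0")
      case True then show ?thesis using qc sa by (intro exI[of _ qc]) (simp add: rat_bits_zero)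
    next
      case False
      have fz: "fuzzy_set S \<mu>" using fd sa by auto
      then have "\<mu> u > 0" using False qc sa(4) unfolding fuzzy_set_def by (metis of_rat_eq_0_iff order_le_less)
      then have usupp: "u \<in> supp S \<mu>" unfolding supp_def using sa by auto
      have finsupp: "finite (supp S \<mu>)" unfolding supp_def using fin by auto
      have "rat_bits qc = real_bits (\<mu> u)" using qc by (simp add: real_bits_of_rat)
      also have "\<dots> \<le> (\<Sum>x\<in>supp S \<mu>. real_bits (\<mu> x))"
        by (rule member_le_sum[OF usupp _ finsupp]) simp
      also have "\<dots> \<le> (\<Sum>\<mu>'\<in>\<delta> s a. \<Sum>x\<in>supp S \<mu>'. real_bits (\<mu>' x))"
        by (rule member_le_sum[OF sa(3)]) (use fd sa in auto)
      also have "\<dots> \<le> (\<Sum>a'\<in>A. \<Sum>\<mu>'\<in>\<delta> s a'. \<Sum>x\<in>supp S \<mu>'. real_bits (\<mu>' x))"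
        by (rule member_le_sum[OF sa(2)]) (use finA in auto)
      also have "\<dots> \<le> (\<Sum>s'\<in>S. \<Sum>a'\<in>A. \<Sum>\<mu>'\<in>\<delta> s' a'. \<Sum>x\<in>supp S \<mu>'. real_bits (\<mu>' x))"
        by (rule member_le_sum[OF sa(1)]) (use fin in auto)
      also have "\<dots> \<le> fts_size S A \<delta>" unfolding fts_size_def by simp
      finally show ?thesis using qc sa by (intro exI[of _ qc]) simp
    qed
  qed
qed

theorem lemma7:
  "\<exists>c k :: nat. \<forall>(S :: nat set) (A :: nat set) \<delta> (\<gamma> :: real).
     fts S A \<delta> \<and> rational_fts S A \<delta> \<and> \<gamma> \<in> \<rat> \<and> 0 < \<gamma> \<and> \<gamma> < 1 \<longrightarrow>
       (\<forall>s\<in>S. \<forall>t\<in>S. fuzzy_dist S A \<delta> \<gamma> s t \<in> \<rat>) \<and>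
       (\<Sum>s\<in>S. \<Sum>t\<in>S. real_bits (fuzzy_dist S A \<delta> \<gamma> s t))
         \<le> c * (fts_size S A \<delta> + real_bits \<gamma> + 1) ^ k"
proof (rule exI[of _ "8::nat"], rule exI[of _ "5::nat"], intro allI impI)
  fix S :: "nat set" and A :: "nat set" and \<delta> :: "nat \<Rightarrow> nat \<Rightarrow> (nat \<Rightarrow> real) set" and \<gamma> :: real
  assume H: "fts S A \<delta> \<and> rational_fts S A \<delta> \<and> \<gamma> \<in> \<rat> \<and> 0 < \<gamma> \<and> \<gamma> < 1"
  have fts: "fts S A \<delta>" and rat: "rational_fts S A \<delta>" and gQ: "\<gamma> \<in> \<rat>" and g0: "0 < \<gamma>" and g1: "\<gamma> < 1"
    using H by auto
  show "(\<forall>s\<in>S. \<forall>t\<in>S. fuzzy_dist S A \<delta> \<gamma> s t \<in> \<rat>) \<and>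
       (\<Sum>s\<in>S. \<Sum>t\<in>S. real_bits (fuzzy_dist S A \<delta> \<gamma> s t))
         \<le> 8 * (fts_size S A \<delta> + real_bits \<gamma> + 1) ^ 5"
  proof (cases "S = {}")
    case True then show ?thesis by simp
  next
    case False
    note ne = False
    have fin: "finite S" and finA: "finite A" and FZs: "\<forall>s\<in>S. \<forall>a\<in>A. FZ S (\<delta> s a)"
      using fts unfolding fts_def FZ_def by auto
    define d where "d = fuzzy_dist S A \<delta> \<gamma>"
    have dd: "d = dstar S A \<delta> \<gamma>" unfolding d_def using fuzzy_dist_eq[OF fin ne finA FZs _ g1] g0 by simp
    have pud: "pseudo_ultrametric S d" and fixd: "Delta S A \<delta> \<gamma> d = d"
      unfolding dd using dstar_fix[OF fin ne finA FZs] g0 g1 by auto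
    have nnd: "nn S d" using pu_parts(1)[OF pud] .
    have rec: "\<forall>p\<in>S \<times> S. (\<lambda>(u,v). d u v) p \<in> (\<lambda>c. \<gamma> * c) ` (CC S A \<delta> \<union> (\<lambda>(u,v). d u v) ` (S \<times> S))"
    proof
      fix p assume p: "p \<in> S \<times> S"
      obtain s t where st: "p = (s, t)" by (cases p)
      have "Delta S A \<delta> \<gamma> d s t \<in> (\<lambda>c. \<gamma> * c) ` (CC S A \<delta> \<union> (\<lambda>(u,v). d u v) ` (S \<times> S))"
        using Delta_in[OF fin ne finA FZs nnd] p st by auto
      then show "(\<lambda>(u,v). d u v) p \<in> (\<lambda>c. \<gamma> * c) ` (CC S A \<delta> \<union> (\<lambda>(u,v). d u v) ` (S \<times> S))"
        using fixd st by simp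
    qed
    have f0: "\<forall>p\<in>S \<times> S. 0 \<le> (\<lambda>(u,v). d u v) p" using nnd unfolding nn_def by auto
    have C0: "0 \<in> CC S A \<delta>" unfolding CC_def by simp
    note R = rank[OF finite_cartesian_product[OF fin fin] f0 g0 g1 C0 rec]
    obtain r where r: "\<gamma> = of_rat r" using gQ by (rule Rats_cases) auto
    define F where "F = fts_size S A \<delta>"
    define bg where "bg = real_bits \<gamma>"
    define M where "M = F + bg + 1"
    have bgr: "bg = rat_bits r" unfolding bg_def r by (simp add: real_bits_of_rat)
    have cardS: "card S \<le> M" unfolding M_def F_def fts_size_def by simp
    have M1: "1 \<le> M" unfolding M_def by simp
    have key: "d s t \<in> \<rat> \<and> real_bits (d s t) \<le> 8 * M^3" if st: "s \<in> S" "t \<in> S" for s t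
    proof -
      obtain j c where jc: "1 \<le> j" "j \<le> card (S \<times> S)" "c \<in> CC S A \<delta>" "d s t = \<gamma> ^ j * c"
        using R st by fastforce
      obtain qc where qc: "c = of_rat qc" "rat_bits qc \<le> F + 3"
        using CC_bits[OF fts rat jc(3)] unfolding F_def by blast
      have dq: "d s t = of_rat (r ^ j * qc)" using jc(4) qc(1) r by (simp add: of_rat_mult of_rat_power)
      have "real_bits (d s t) = rat_bits (r ^ j * qc)" using dq by (simp add: real_bits_of_rat)
      also have "\<dots> \<le> rat_bits (r ^ j) + rat_bits qc" by (rule rat_bits_mult)
      also have "\<dots> \<le> 3 + j * bg + (F + 3)" using rat_bits_pow[of r j] qc(2) bgr by simp
      finally have b1: "real_bits (d s t) \<le> 6 + j * bg + F" by simp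
      have "card S * card S \<le> M * M" using mult_le_mono[OF cardS cardS] .
      then have "j \<le> M * M" using jc(2) by (simp add: card_cartesian_product)
      moreover have "bg \<le> M" unfolding M_def by simp
      ultimately have "j * bg \<le> M * M * M" by (simp add: mult_le_mono)
      moreover have "F \<le> M" unfolding M_def by simp
      moreover have "M \<le> M * M * M" using M1 by (simp add: mult_le_mono)
      moreover have "1 \<le> M * M * M" using M1 by (simp add: mult_le_mono one_le_mult_iff)
      ultimately have "real_bits (d s t) \<le> 8 * (M * M * M)" using b1 by linarith
      then show ?thesis using dq by (simp add: power3_eq_cube)
    qed
    have "(\<Sum>s\<in>S. \<Sum>t\<in>S. real_bits (d s t)) \<le> (\<Sum>s\<in>S. \<Sum>t\<in>S. 8 * M^3)"
      using key by (intro sum_mono) auto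
    also have "\<dots> = card S * (card S * (8 * M^3))" by simp
    also have "\<dots> \<le> M * (M * (8 * M^3))" using cardS by (simp add: mult_le_mono)
    also have "\<dots> = 8 * M^5" by (simp add: power_numeral_reduce)
    finally have sb: "(\<Sum>s\<in>S. \<Sum>t\<in>S. real_bits (d s t)) \<le> 8 * M^5" .
    show ?thesis using key sb unfolding d_def M_def F_def bg_def by auto
  qed
qed


end
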